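(* Let $A\subseteq B\subseteq C$ be commutative rings with the same identity. If $A$ is a dense subring of $B$ and $B$ is a dense subring of $C$, then $A$ is a dense subring of $C$.
   Context: A subring $A$ of a ring $B$ is dense in $B$ if for every ideal $I$ of $B$ and every $b\in B\setminus \operatorname{rad}(I)$ there exists $a\in B\setminus\operatorname{rad}(I)$ with $ab\in A$. *)

theory Defs
  imports "HOL-Algebra.Algebra"
begin

definition ideal_rad :: "('a, 'b) ring_scheme \<Rightarrow> 'a set \<Rightarrow> 'a set" where
  "ideal_rad R I = {x \<in> carrier R. \<exists>n::nat. x [^]\<^bsub>R\<^esub> n \<in> I}"

definition dense_subring :: "'a set \<Rightarrow> ('a, 'b) ring_scheme \<Rightarrow> bool" where
  "dense_subring A R \<longleftrightarrow> subring A R \<and>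
     (\<forall>I. ideal I R \<longrightarrow>
        (\<forall>b \<in> carrier R - ideal_rad R I.
           \<exists>a \<in> carrier R - ideal_rad R I. a \<otimes>\<^bsub>R\<^esub> b \<in> A))"

end

theory Submission
  imports Defs
begin

lemma (in cring) sat_ideal:
  assumes I: "ideal I R" and c: "c \<in> carrier R"
  shows "ideal {x \<in> carrier R. \<exists>n::nat. x \<otimes> c [^] n \<in> I} R"
proof (rule idealI)
  show "ring R" by (rule ring_axioms)
  interpret ideal I R by (rule I)
  show "subgroup {x \<in> carrier R. \<exists>n::nat. x \<otimes> c [^] n \<in> I} (add_monoid R)"
  proof (rule add.subgroupI)
    show "{x \<in> carrier R. \<exists>n::nat. x \<otimes> c [^] n \<in> I} \<subseteq> carrier R" by auto
    show "{x \<in> carrier R. \<exists>n::nat. x \<otimes> c [^] n \<in> I} \<noteq> {}"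
    proof -
      have "\<zero> \<otimes> c [^] (0::nat) \<in> I" using c by simp
      then have "\<zero> \<in> {x \<in> carrier R. \<exists>n::nat. x \<otimes> c [^] n \<in> I}" by blast
      then show ?thesis by blast
    qed
  next
    fix a assume "a \<in> {x \<in> carrier R. \<exists>n::nat. x \<otimes> c [^] n \<in> I}"
    then obtain n :: nat where a: "a \<in> carrier R" "a \<otimes> c [^] n \<in> I" by auto
    have "(\<ominus> a) \<otimes> c [^] n = \<ominus> (a \<otimes> c [^] n)" using a c by (simp add: l_minus)
    moreover have "\<ominus> (a \<otimes> c [^] n) \<in> I" using a by (simp add: a_inv_closed)
    ultimately have "(\<ominus> a) \<otimes> c [^] n \<in> I" by simp
    then show "\<ominus> a \<in> {x \<in> carrier R. \<exists>n::nat. x \<otimes> c [^] n \<in> I}"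
      using a by blast
  next
    fix a b assume "a \<in> {x \<in> carrier R. \<exists>n::nat. x \<otimes> c [^] n \<in> I}"
      "b \<in> {x \<in> carrier R. \<exists>n::nat. x \<otimes> c [^] n \<in> I}"
    then obtain n m :: nat where a: "a \<in> carrier R" "a \<otimes> c [^] n \<in> I"
      and b: "b \<in> carrier R" "b \<otimes> c [^] m \<in> I" by auto
    have "(a \<oplus> b) \<otimes> c [^] (n + m) = (a \<otimes> c [^] n) \<otimes> c [^] m \<oplus> (b \<otimes> c [^] m) \<otimes> c [^] n"
      using a b c by (simp add: nat_pow_mult[symmetric] l_distr m_assoc m_comm[of "c [^] n"])
    moreover have "(a \<otimes> c [^] n) \<otimes> c [^] m \<oplus> (b \<otimes> c [^] m) \<otimes> c [^] n \<in> I"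
      using a b c by (simp add: I_r_closed a_closed)
    ultimately show "a \<oplus> b \<in> {x \<in> carrier R. \<exists>n::nat. x \<otimes> c [^] n \<in> I}"
      using a b by (intro CollectI conjI exI[of _ "n+m"]) auto
  qed
next
  interpret ideal I R by (rule I)
  fix a x assume "a \<in> {x \<in> carrier R. \<exists>n::nat. x \<otimes> c [^] n \<in> I}" "x \<in> carrier R"
  then obtain n :: nat where a: "a \<in> carrier R" "a \<otimes> c [^] n \<in> I" and x: "x \<in> carrier R" by auto
  have "(x \<otimes> a) \<otimes> c [^] n = x \<otimes> (a \<otimes> c [^] n)" using a x c by (simp add: m_assoc)
  then have "(x \<otimes> a) \<otimes> c [^] n \<in> I" using a x by (simp add: I_l_closed)
  then show "x \<otimes> a \<in> {x \<in> carrier R. \<exists>n::nat. x \<otimes> c [^] n \<in> I}" using a x by auto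
  then show "a \<otimes> x \<in> {x \<in> carrier R. \<exists>n::nat. x \<otimes> c [^] n \<in> I}" using a x by (simp add: m_comm)
qed


lemma (in ring) ideal_crit:
  assumes sub: "I \<subseteq> carrier R" and z: "\<zero> \<in> I"
    and add: "\<And>a b. a \<in> I \<Longrightarrow> b \<in> I \<Longrightarrow> a \<oplus> b \<in> I"
    and ml: "\<And>a x. a \<in> I \<Longrightarrow> x \<in> carrier R \<Longrightarrow> x \<otimes> a \<in> I"
    and mr: "\<And>a x. a \<in> I \<Longrightarrow> x \<in> carrier R \<Longrightarrow> a \<otimes> x \<in> I"
  shows "ideal I R"
proof (rule idealI)
  show "ring R" by (rule ring_axioms)
  show "subgroup I (add_monoid R)"
  proof (rule add.subgroupI)
    show "I \<subseteq> carrier R" by (rule sub)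
    show "I \<noteq> {}" using z by blast
  next
    fix a assume a: "a \<in> I"
    have ac: "a \<in> carrier R" using a sub by blast
    have "\<ominus> a = (\<ominus> \<one>) \<otimes> a" using ac by (simp add: l_minus)
    then show "\<ominus> a \<in> I" using ml[OF a, of "\<ominus> \<one>"] by simp
  next
    fix a b assume "a \<in> I" "b \<in> I" then show "a \<oplus> b \<in> I" by (rule add)
  qed
qed (auto intro: ml mr)

lemma pow_upd:
  fixes R :: "('a, 'b) monoid_scheme"
  shows "pow (R\<lparr>carrier := Z\<rparr>) x (n::nat) = pow R x n"
  by (simp add: nat_pow_def)

theorem theorem3p2:
  fixes C :: "('a, 'b) ring_scheme" and A B :: "'a set"
  assumes "cring C"
    and "subring B C"
    and "dense_subring A (C\<lparr>carrier := B\<rparr>)"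
    and "dense_subring B C"
  shows "dense_subring A C"
proof -
  interpret C: cring C by (rule assms(1))
  let ?S = "C\<lparr>carrier := B\<rparr>"
  have BC: "B \<subseteq> carrier C" using assms(2) subringE(1) by blast
  have Ssc: "subcring B C" using C.subcringI'[OF assms(2)] .
  have Scr: "cring ?S" using C.subcring_iff[OF BC] Ssc by simp
  interpret S: cring ?S by (rule Scr)
  have AS: "subring A ?S" and dAS: "\<And>I. ideal I ?S \<Longrightarrow> \<forall>b \<in> B - ideal_rad ?S I.
           \<exists>a \<in> B - ideal_rad ?S I. a \<otimes>\<^bsub>C\<^esub> b \<in> A"
    using assms(3) unfolding dense_subring_def by auto
  have dBC: "\<And>I. ideal I C \<Longrightarrow> \<forall>b \<in> carrier C - ideal_rad C I.
           \<exists>a \<in> carrier C - ideal_rad C I. a \<otimes>\<^bsub>C\<^esub> b \<in> B"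
    using assms(4) unfolding dense_subring_def by auto
  have AB: "A \<subseteq> B" using AS subringE(1) by fastforce
  have "ring (?S\<lparr>carrier := A\<rparr>)" using S.subring_iff[of A] AB AS by simp
  then have "ring (C\<lparr>carrier := A\<rparr>)" by simp
  then have subA: "subring A C" using C.subring_iff[of A] AB BC by auto
  show ?thesis
    unfolding dense_subring_def
  proof (intro conjI allI impI ballI subA)
    fix I c assume I: "ideal I C" and c0: "c \<in> carrier C - ideal_rad C I"
    interpret I: ideal I C by (rule I)
    have c: "c \<in> carrier C" and cI: "\<And>n::nat. c [^]\<^bsub>C\<^esub> n \<notin> I"
      using c0 unfolding ideal_rad_def by auto
    define J where "J = {x \<in> carrier C. \<exists>n::nat. x \<otimes>\<^bsub>C\<^esub> c [^]\<^bsub>C\<^esub> n \<in> I}"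
    have J: "ideal J C" unfolding J_def by (rule C.sat_ideal[OF I c])
    have "c \<notin> ideal_rad C J"
    proof
      assume "c \<in> ideal_rad C J"
      then obtain k n :: nat where "c [^]\<^bsub>C\<^esub> k \<otimes>\<^bsub>C\<^esub> c [^]\<^bsub>C\<^esub> n \<in> I"
        unfolding ideal_rad_def J_def by auto
      then have "c [^]\<^bsub>C\<^esub> (k + n) \<in> I" using c by (simp add: C.nat_pow_mult)
      then show False using cI by blast
    qed
    then obtain d where d0: "d \<in> carrier C - ideal_rad C J" and dcB: "d \<otimes>\<^bsub>C\<^esub> c \<in> B"
      using dBC[OF J] c by blast
    have d: "d \<in> carrier C" using d0 by simp
    have dI: "d [^]\<^bsub>C\<^esub> n \<otimes>\<^bsub>C\<^esub> c [^]\<^bsub>C\<^esub> m \<notin> I" for n m :: nat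
    proof
      assume "d [^]\<^bsub>C\<^esub> n \<otimes>\<^bsub>C\<^esub> c [^]\<^bsub>C\<^esub> m \<in> I"
      then have "d [^]\<^bsub>C\<^esub> n \<in> J" unfolding J_def using d by auto
      then show False using d0 d unfolding ideal_rad_def by auto
    qed
    define b where "b = d \<otimes>\<^bsub>C\<^esub> c"
    have bB: "b \<in> B" using dcB b_def by simp
    have b: "b \<in> carrier C" using bB BC by blast
    have bpow: "\<And>n::nat. b [^]\<^bsub>C\<^esub> n = d [^]\<^bsub>C\<^esub> n \<otimes>\<^bsub>C\<^esub> c [^]\<^bsub>C\<^esub> n"
      unfolding b_def using c d by (simp add: C.pow_mult_distrib C.m_comm)
    have bI: "\<And>n::nat. b [^]\<^bsub>C\<^esub> n \<notin> I" using bpow dI by simp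
    define J2 where "J2 = {x \<in> carrier C. \<exists>n::nat. x \<otimes>\<^bsub>C\<^esub> b [^]\<^bsub>C\<^esub> n \<in> I}"
    have J2: "ideal J2 C" unfolding J2_def by (rule C.sat_ideal[OF I b])
    interpret J2: ideal J2 C by (rule J2)
    define K where "K = B \<inter> J2"
    have K: "ideal K ?S"
    proof (rule S.ideal_crit)
      show "K \<subseteq> carrier ?S" unfolding K_def by auto
      show "\<zero>\<^bsub>?S\<^esub> \<in> K" unfolding K_def using assms(2) subringE(2) J2.zero_closed by auto
    next
      fix x y assume "x \<in> K" "y \<in> K"
      then show "x \<oplus>\<^bsub>?S\<^esub> y \<in> K" unfolding K_def
        using assms(2) subringE(7) J2.a_closed by auto
    next
      fix a x assume "a \<in> K" "x \<in> carrier ?S"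
      then show "x \<otimes>\<^bsub>?S\<^esub> a \<in> K" and "a \<otimes>\<^bsub>?S\<^esub> x \<in> K" unfolding K_def
        using assms(2) subringE(6) J2.I_l_closed J2.I_r_closed BC by auto
    qed
    have "b \<notin> ideal_rad ?S K"
    proof
      assume "b \<in> ideal_rad ?S K"
      then obtain k n :: nat where "b [^]\<^bsub>C\<^esub> k \<otimes>\<^bsub>C\<^esub> b [^]\<^bsub>C\<^esub> n \<in> I"
        unfolding ideal_rad_def K_def J2_def pow_upd by auto
      then have "b [^]\<^bsub>C\<^esub> (k + n) \<in> I" using b by (simp add: C.nat_pow_mult)
      then show False using bI by blast
    qed
    then obtain a' where a'0: "a' \<in> B - ideal_rad ?S K" and a'b: "a' \<otimes>\<^bsub>C\<^esub> b \<in> A"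
      using dAS[OF K] bB by blast
    have a'B: "a' \<in> B" using a'0 by simp
    have a': "a' \<in> carrier C" using a'B BC by blast
    have a'I: "a' [^]\<^bsub>C\<^esub> n \<otimes>\<^bsub>C\<^esub> b [^]\<^bsub>C\<^esub> m \<notin> I" for n m :: nat
    proof
      assume "a' [^]\<^bsub>C\<^esub> n \<otimes>\<^bsub>C\<^esub> b [^]\<^bsub>C\<^esub> m \<in> I"
      moreover have "a' [^]\<^bsub>C\<^esub> n \<in> B"
        proof -
        have "a' [^]\<^bsub>?S\<^esub> n \<in> carrier ?S" using a'B by (intro S.nat_pow_closed) simp
        then show ?thesis by (simp add: pow_upd)
      qed
      ultimately have "a' [^]\<^bsub>C\<^esub> n \<in> K" unfolding K_def J2_def using a' by auto
      then show False using a'0 a'B unfolding ideal_rad_def pow_upd by auto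
    qed
    show "\<exists>a\<in>carrier C - ideal_rad C I. a \<otimes>\<^bsub>C\<^esub> c \<in> A"
    proof (intro bexI[of _ "a' \<otimes>\<^bsub>C\<^esub> d"])
      show "a' \<otimes>\<^bsub>C\<^esub> d \<otimes>\<^bsub>C\<^esub> c \<in> A"
        using a'b a' d c unfolding b_def by (simp add: C.m_assoc)
      have "a' \<otimes>\<^bsub>C\<^esub> d \<notin> ideal_rad C I"
      proof
        assume "a' \<otimes>\<^bsub>C\<^esub> d \<in> ideal_rad C I"
        then obtain n :: nat where "(a' \<otimes>\<^bsub>C\<^esub> d) [^]\<^bsub>C\<^esub> n \<in> I"
          unfolding ideal_rad_def by auto
        then have "(a' \<otimes>\<^bsub>C\<^esub> d) [^]\<^bsub>C\<^esub> n \<otimes>\<^bsub>C\<^esub> c [^]\<^bsub>C\<^esub> n \<in> I"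
          using c by (simp add: I.I_r_closed)
        moreover have "(a' \<otimes>\<^bsub>C\<^esub> d) [^]\<^bsub>C\<^esub> n \<otimes>\<^bsub>C\<^esub> c [^]\<^bsub>C\<^esub> n
            = a' [^]\<^bsub>C\<^esub> n \<otimes>\<^bsub>C\<^esub> b [^]\<^bsub>C\<^esub> n"
          using a' d c by (simp add: bpow C.pow_mult_distrib C.m_ac)
        ultimately show False using a'I by simp
      qed
      then show "a' \<otimes>\<^bsub>C\<^esub> d \<in> carrier C - ideal_rad C I" using a' d by simp
    qed
  qed
qed

end
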